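(* Let $d \geq 3$ and let $P$ be the Markov kernel on $\mathbb{S}^{d-1}\times\mathcal{B}(\mathbb{S}^{d-1})$ given by \[ P(x,A) = \frac{1}{2\pi\,\sigma^{(x)}_{d-2}(\mathbb{S}^{d-2}_x)} \int_{\mathbb{S}^{d-2}_x} \int_0^{2\pi} \mathbb{1}_A\big(\cos(\omega)x + \sin(\omega) z\big)\, \mathrm{d}\omega\, \sigma^{(x)}_{d-2}(\mathrm{d}z). \] Then $P$ is Wasserstein contractive with rate $\rho = 7/8$, i.e. $\mathsf{Dob}(P)\le 7/8$.
   Context: $\mathbb{S}^{d-1} = \{x\in\mathbb{R}^d:\|x\|=1\}$ with Euclidean norm $\|\cdot\|$ and Borel $\sigma$-algebra. For $x\in\mathbb{S}^{d-1}$, $\mathbb{S}^{d-2}_x := \{z\in\mathbb{S}^{d-1}: x^Tz=0\}$ with natural surface measure $\sigma^{(x)}_{d-2}$. $P$ is the transition kernel of geodesic slice sampling on the sphere for a constant target density. $\mathcal{W}$ is the Wasserstein-1 distance w.r.t. the Euclidean distance restricted to the sphere, $\mathsf{Dob}(P) := \sup_{x\neq y}\mathcal{W}(P(x,\cdot),P(y,\cdot))/\|x-y\|$, and $P$ is Wasserstein contractive with rate $\rho$ if $\mathsf{Dob}(P)\le\rho<1$. *)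

theory Defs
  imports "HOL-Probability.Probability"
begin

definition usphere :: "'a::euclidean_space set" where
  "usphere = {x. norm x = 1}"

definition sph_space :: "'a::euclidean_space measure" where
  "sph_space = restrict_space borel usphere"

definition subsphere :: "'a::euclidean_space \<Rightarrow> 'a set" where
  "subsphere x = {z. norm z = 1 \<and> inner x z = 0}"

text \<open>Natural surface measure on S^{d-2}_x, via the cone-measure formula
  sigma(B) = (d-1) * lambda_{d-1}({t z. z in B, 0 < t <= 1}) where lambda_{d-1} is
  the (d-1)-dimensional Lebesgue measure on the hyperplane x^perp.  The latter is
  expressed as the d-dimensional Lebesgue measure of the cylinder of height 1
  in direction x (x a unit normal of the hyperplane).\<close>
definition cone_cyl :: "'a::euclidean_space \<Rightarrow> 'a set \<Rightarrow> 'a set" where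
  "cone_cyl x B = {t *\<^sub>R z + s *\<^sub>R x | z t s. z \<in> B \<and> 0 < t \<and> t \<le> 1 \<and> 0 \<le> s \<and> s \<le> 1}"

definition sub_surface :: "'a::euclidean_space \<Rightarrow> 'a measure" where
  "sub_surface x = measure_of (subsphere x) (sets (restrict_space borel (subsphere x)))
     (\<lambda>B. of_nat (DIM('a) - 1) * emeasure lborel (cone_cyl x B))"

definition gss_kernel :: "'a::euclidean_space \<Rightarrow> 'a set \<Rightarrow> ennreal" where
  "gss_kernel x A =
     (\<integral>\<^sup>+ z. (\<integral>\<^sup>+ \<omega>. indicator {0..2*pi} \<omega> * indicator A (cos \<omega> *\<^sub>R x + sin \<omega> *\<^sub>R z) \<partial>lborel)
        \<partial>sub_surface x)
     / (ennreal (2 * pi) * emeasure (sub_surface x) (subsphere x))"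

definition gss_P :: "'a::euclidean_space \<Rightarrow> 'a measure" where
  "gss_P x = measure_of usphere (sets sph_space) (gss_kernel x)"

definition coupling :: "'a::euclidean_space measure \<Rightarrow> 'a measure \<Rightarrow> ('a \<times> 'a) measure \<Rightarrow> bool" where
  "coupling \<mu> \<nu> \<gamma> \<longleftrightarrow> sets \<gamma> = sets (sph_space \<Otimes>\<^sub>M sph_space) \<and> prob_space \<gamma> \<and>
     distr \<gamma> sph_space fst = \<mu> \<and> distr \<gamma> sph_space snd = \<nu>"

definition wasserstein1 :: "'a::euclidean_space measure \<Rightarrow> 'a measure \<Rightarrow> ennreal" where
  "wasserstein1 \<mu> \<nu> = (INF \<gamma> \<in> {\<gamma>. coupling \<mu> \<nu> \<gamma>}. \<integral>\<^sup>+ p. ennreal (dist (fst p) (snd p)) \<partial>\<gamma>)"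

definition Dob :: "('a::euclidean_space \<Rightarrow> 'a measure) \<Rightarrow> ennreal" where
  "Dob P = (SUP p \<in> {(x, y). x \<in> usphere \<and> y \<in> usphere \<and> x \<noteq> y}.
              wasserstein1 (P (fst p)) (P (snd p)) / ennreal (dist (fst p) (snd p)))"

end

theory Submission
  imports Defs "HOL-Analysis.Analysis" "HOL-Library.Countable"
begin


typedef (overloaded) ('a::euclidean_space) bidx = "Basis :: 'a set"
  using nonempty_Basis by blast

instance bidx :: (euclidean_space) finite
proof
  have "(UNIV :: 'a bidx set) = Abs_bidx ` Basis"
    by (metis Rep_bidx_inverse Rep_bidx image_eqI UNIV_eq_I)
  then show "finite (UNIV :: 'a bidx set)" by (metis finite_Basis finite_imageI)
qed

instantiation bidx :: (euclidean_space) linorder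
begin
definition less_eq_bidx :: "'a bidx \<Rightarrow> 'a bidx \<Rightarrow> bool" where
  "less_eq_bidx i j = (to_nat i \<le> to_nat j)"
definition less_bidx :: "'a bidx \<Rightarrow> 'a bidx \<Rightarrow> bool" where
  "less_bidx i j = (to_nat i < to_nat j)"
instance
  by standard (auto simp: less_eq_bidx_def less_bidx_def)
end

instance bidx :: (euclidean_space) wellorder
proof
  fix P :: "'a bidx \<Rightarrow> bool" and a
  assume H: "\<And>x. (\<And>y. y < x \<Longrightarrow> P y) \<Longrightarrow> P x"
  have "\<forall>x. to_nat x = n \<longrightarrow> P x" for n
    by (induction n rule: less_induct) (metis H less_bidx_def)
  then show "P a" by blast
qed

definition phi :: "'a::euclidean_space \<Rightarrow> real ^ ('a bidx)" where
  "phi v = (\<chi> i. v \<bullet> Rep_bidx i)"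
definition psi :: "real ^ ('a::euclidean_space bidx) \<Rightarrow> 'a" where
  "psi w = (\<Sum>i\<in>UNIV. (w $ i) *\<^sub>R Rep_bidx i)"

lemma sum_bidx: "(\<Sum>i\<in>UNIV. f (Rep_bidx i)) = (\<Sum>b\<in>(Basis::'a::euclidean_space set). f b)"
proof -
  have "(\<Sum>b\<in>Rep_bidx ` (UNIV :: 'a bidx set). f b) = (\<Sum>i\<in>UNIV. f (Rep_bidx i))"
    by (rule sum.reindex_cong[of Rep_bidx]) (auto simp: inj_on_def Rep_bidx_inject)
  moreover have "Rep_bidx ` (UNIV :: 'a bidx set) = Basis"
    using type_definition.Rep_range[OF type_definition_bidx] by simp
  ultimately show ?thesis by simp
qed

lemma prod_bidx: "(\<Prod>i\<in>UNIV. f (Rep_bidx i)) = (\<Prod>b\<in>(Basis::'a::euclidean_space set). f b)"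
proof -
  have "(\<Prod>b\<in>Rep_bidx ` (UNIV :: 'a bidx set). f b) = (\<Prod>i\<in>UNIV. f (Rep_bidx i))"
    by (rule prod.reindex_cong[of Rep_bidx]) (auto simp: inj_on_def Rep_bidx_inject)
  moreover have "Rep_bidx ` (UNIV :: 'a bidx set) = Basis"
    using type_definition.Rep_range[OF type_definition_bidx] by simp
  ultimately show ?thesis by simp
qed

lemma prod_Basis_cart: "(\<Prod>b\<in>(Basis :: (real^'n) set). f b) = (\<Prod>i\<in>UNIV. f (axis i 1))"
proof -
  have "(Basis :: (real^'n) set) = (\<lambda>i. axis i 1) ` UNIV"
    by (auto simp: Basis_vec_def)
  moreover have "inj (\<lambda>i::'n. axis i (1::real))"
    by (auto simp: inj_on_def axis_eq_axis)
  ultimately show ?thesis using prod.reindex[of "\<lambda>i::'n. axis i (1::real)" UNIV f] by (simp add: o_def)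
qed

lemma phi_comp [simp]: "phi v $ i = v \<bullet> Rep_bidx i"
  by (simp add: phi_def)

lemma ball_Basis_bidx: "(\<forall>b\<in>(Basis::'a::euclidean_space set). P b) \<longleftrightarrow> (\<forall>i::'a bidx. P (Rep_bidx i))"
  using Rep_bidx Abs_bidx_inverse by metis

lemma psi_phi [simp]: "psi (phi v) = v"
  unfolding psi_def phi_def
  using sum_bidx[of "\<lambda>b. (v \<bullet> b) *\<^sub>R b"] by (simp add: euclidean_representation)

lemma phi_psi [simp]: "phi (psi w) = w"
proof -
  have "psi w \<bullet> Rep_bidx j = w $ j" for j
  proof -
    have "psi w \<bullet> Rep_bidx j = (\<Sum>i\<in>UNIV. (w $ i) * (Rep_bidx i \<bullet> Rep_bidx j))"
      unfolding psi_def by (simp add: inner_sum_left)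
    also have "\<dots> = (\<Sum>i\<in>UNIV. if i = j then w $ i else 0)"
      by (intro sum.cong refl) (auto simp: inner_Basis Rep_bidx Rep_bidx_inject)
    finally show ?thesis by simp
  qed
  then show ?thesis unfolding phi_def by (simp add: vec_eq_iff)
qed

lemma psi_inner [simp]: "psi w \<bullet> Rep_bidx i = w $ i"
  using phi_comp[of "psi w" i] by simp

lemma linear_phi: "linear phi"
  unfolding phi_def by (rule linearI) (auto simp: vec_eq_iff inner_add_left)

lemma linear_psi: "linear (psi :: real ^ (('a::euclidean_space) bidx) \<Rightarrow> 'a)"
proof (rule linearI)
  fix a b :: "real ^ ('a bidx)" and c :: real
  show "psi (a + b) = psi a + psi b"
    unfolding psi_def by (simp add: scaleR_add_left sum.distrib)
  show "psi (c *\<^sub>R a) = c *\<^sub>R psi a"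
    unfolding psi_def by (simp add: scaleR_sum_right)
qed

lemma inner_phi: "phi v \<bullet> phi w = v \<bullet> w"
proof -
  have "phi v \<bullet> phi w = (\<Sum>i\<in>UNIV. (v \<bullet> Rep_bidx i) * (w \<bullet> Rep_bidx i))"
    unfolding phi_def inner_vec_def by simp
  also have "\<dots> = (\<Sum>b\<in>Basis. (v \<bullet> b) * (w \<bullet> b))"
    by (rule sum_bidx)
  also have "\<dots> = v \<bullet> w" by (rule euclidean_inner[symmetric])
  finally show ?thesis .
qed

lemma inner_psi: "psi v \<bullet> psi w = v \<bullet> w"
  by (metis inner_phi phi_psi)

lemma meas_phi: "phi \<in> borel_measurable borel"
proof -
  have "bounded_linear phi" using linear_phi by (simp add: linear_conv_bounded_linear)
  then show ?thesis by (intro borel_measurable_continuous_onI linear_continuous_on)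
qed

lemma meas_psi: "psi \<in> borel_measurable borel"
proof -
  have "bounded_linear psi" using linear_psi by (simp add: linear_conv_bounded_linear)
  then show ?thesis by (intro borel_measurable_continuous_onI linear_continuous_on)
qed

lemma distr_phi: "distr lborel borel (phi :: 'a::euclidean_space \<Rightarrow> _) = lborel"
proof (rule lborel_eqI[symmetric])
  fix l u :: "real ^ ('a bidx)"
  assume lu: "\<And>b. b \<in> Basis \<Longrightarrow> l \<bullet> b \<le> u \<bullet> b"
  have lu': "l $ i \<le> u $ i" for i using lu[of "axis i 1"] by (simp add: inner_axis)
  have pre: "phi -` box l u = box (psi l) (psi u)"
  proof -
    have "v \<in> box (psi l) (psi u) \<longleftrightarrow> (\<forall>i. l $ i < phi v $ i \<and> phi v $ i < u $ i)" for v
    proof -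
      have "v \<in> box (psi l) (psi u) \<longleftrightarrow> (\<forall>i. psi l \<bullet> Rep_bidx i < v \<bullet> Rep_bidx i \<and> v \<bullet> Rep_bidx i < psi u \<bullet> Rep_bidx i)"
        unfolding mem_box by (rule ball_Basis_bidx)
      also have "\<dots> \<longleftrightarrow> (\<forall>i. l $ i < phi v $ i \<and> phi v $ i < u $ i)"
        by simp
      finally show ?thesis .
    qed
    then show ?thesis by (auto simp: mem_box_cart)
  qed
  have "emeasure (distr lborel borel phi) (box l u) = emeasure lborel (box (psi l) (psi u))"
    by (subst emeasure_distr) (auto simp: meas_phi pre)
  also have "\<dots> = (\<Prod>b\<in>Basis. (psi u - psi l) \<bullet> b)"
  proof (rule emeasure_lborel_box)
    fix b :: 'a assume "b \<in> Basis"
    then have "b = Rep_bidx (Abs_bidx b)" by (simp add: Abs_bidx_inverse)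
    then show "psi l \<bullet> b \<le> psi u \<bullet> b" using lu' by (metis psi_inner)
  qed
  also have "\<dots> = (\<Prod>i\<in>UNIV. (psi u - psi l) \<bullet> Rep_bidx i)" by (simp add: prod_bidx)
  also have "\<dots> = (\<Prod>i\<in>UNIV. (u - l) \<bullet> axis i 1)"
    by (rule arg_cong[where f=ennreal], rule prod.cong) (simp_all add: inner_diff_left inner_axis)
  also have "\<dots> = (\<Prod>b\<in>Basis. (u - l) \<bullet> b)" by (simp add: prod_Basis_cart)
  finally show "emeasure (distr lborel borel phi) (box l u) = (\<Prod>b\<in>Basis. (u - l) \<bullet> b)" .
qed simp

lemma distr_psi: "distr lborel borel (psi :: _ \<Rightarrow> 'a::euclidean_space) = lborel"
proof -
  have "distr lborel borel (psi :: _ \<Rightarrow> 'a) = distr (distr lborel borel (phi :: 'a \<Rightarrow> _)) borel psi"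
    by (simp add: distr_phi)
  also have "\<dots> = distr lborel borel (psi \<circ> phi)"
    by (subst distr_distr) (auto simp: meas_phi meas_psi)
  also have "\<dots> = lborel" by (simp add: o_def distr_id2)
  finally show ?thesis .
qed


lemma linear_borel: "linear (f :: 'a::euclidean_space \<Rightarrow> 'b::euclidean_space) \<Longrightarrow> f \<in> borel_measurable borel"
proof -
  assume "linear f"
  then have "bounded_linear f" by (simp add: linear_conv_bounded_linear)
  then show ?thesis by (intro borel_measurable_continuous_onI linear_continuous_on)
qed

lemma orth_cart:
  fixes T :: "real^'n::{finite,wellorder} \<Rightarrow> real^'n::_"
  assumes T: "orthogonal_transformation T"
  shows "distr lborel borel T = lborel"
proof (rule lborel_eqI[symmetric])
  fix l u :: "real^'n::{finite,wellorder}"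
  assume lu: "\<And>b. b \<in> Basis \<Longrightarrow> l \<bullet> b \<le> u \<bullet> b"
  have measT: "T \<in> borel_measurable borel"
    using T linear_borel orthogonal_transformation_linear by blast
  have pre: "T -` box l u = inv T ` box l u"
    using T orthogonal_transformation_bij bij_vimage_eq_inv_image by blast
  have boxl: "box l u \<in> lmeasurable" by (simp add: lmeasurable_open)
  have S: "inv T ` box l u \<in> lmeasurable"
    and mS: "measure lebesgue (inv T ` box l u) = measure lebesgue (box l u)"
    using measurable_orthogonal_image[OF orthogonal_transformation_inv[OF T] boxl]
      measure_orthogonal_image[OF orthogonal_transformation_inv[OF T] boxl] by auto
  have Sb: "T -` box l u \<in> sets borel"
    using measT by (simp add: measurable_sets_borel)
  have "emeasure (distr lborel borel T) (box l u) = emeasure lborel (T -` box l u)"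
    using measT by (subst emeasure_distr) auto
  also have "\<dots> = emeasure lebesgue (T -` box l u)"
    using Sb by simp
  also have "\<dots> = measure lebesgue (inv T ` box l u)"
    using S pre by (simp add: emeasure_eq_measure2)
  also have "\<dots> = measure lebesgue (box l u)" by (simp add: mS)
  also have "\<dots> = emeasure lebesgue (box l u)"
    using boxl by (simp add: emeasure_eq_measure2)
  also have "\<dots> = emeasure lborel (box l u)" by simp
  also have "\<dots> = (\<Prod>b\<in>Basis. (u - l) \<bullet> b)"
    using lu by (simp add: emeasure_lborel_box inner_diff_left)
  finally show "emeasure (distr lborel borel T) (box l u) = (\<Prod>b\<in>Basis. (u - l) \<bullet> b)" .
qed simp

lemma norm_phi: "norm (phi v) = norm v"
  by (simp add: norm_eq_sqrt_inner inner_phi)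

lemma distr_orth:
  fixes T :: "'a::euclidean_space \<Rightarrow> 'a"
  assumes T: "orthogonal_transformation T"
  shows "distr lborel borel T = lborel"
proof -
  define T' where "T' = (\<lambda>w. phi (T (psi w)))"
  have linT: "linear T" using T orthogonal_transformation_linear by blast
  have "linear T'"
    unfolding T'_def using linear_compose[OF linear_compose[OF linear_psi linT] linear_phi]
    by (simp add: o_def)
  moreover have "norm (T' v) = norm v" for v
    unfolding T'_def using T
    by (metis norm_phi orthogonal_transformation_norm phi_psi)
  ultimately have T': "orthogonal_transformation T'" by (simp add: orthogonal_transformation)
  have mT': "T' \<in> borel_measurable borel" using \<open>linear T'\<close> linear_borel by blast
  have mc: "T' \<circ> phi \<in> borel_measurable borel"
    using measurable_comp[OF meas_phi mT'] by simp
  have "distr lborel borel T = distr lborel borel (psi \<circ> T' \<circ> phi)"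
    by (simp add: T'_def o_def)
  also have "\<dots> = distr (distr lborel borel (T' \<circ> phi)) borel psi"
    by (subst distr_distr) (auto simp: meas_phi meas_psi mT' mc comp_assoc)
  also have "\<dots> = distr (distr (distr lborel borel (phi :: 'a \<Rightarrow> _)) borel T') borel psi"
    by (subst (2) distr_distr) (auto simp: meas_phi meas_psi mT')
  also have "\<dots> = lborel"
    by (simp add: distr_phi orth_cart[OF T'] distr_psi)
  finally show ?thesis .
qed


definition cyl :: "'a::euclidean_space \<Rightarrow> 'a set" where
  "cyl x = {p. 0 < norm (p - (x \<bullet> p) *\<^sub>R x) \<and> norm (p - (x \<bullet> p) *\<^sub>R x) \<le> 1 \<and> 0 \<le> x \<bullet> p \<and> x \<bullet> p \<le> 1}"

definition gx :: "'a::euclidean_space \<Rightarrow> 'a \<Rightarrow> 'a" where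
  "gx x p = (1 / norm (p - (x \<bullet> p) *\<^sub>R x)) *\<^sub>R (p - (x \<bullet> p) *\<^sub>R x)"

definition Mx :: "'a::euclidean_space \<Rightarrow> 'a measure" where
  "Mx x = density (restrict_space lborel (cyl x)) (\<lambda>_. of_nat (DIM('a) - 1))"

lemma cyl_borel: "cyl x \<in> sets borel"
  unfolding cyl_def by measurable

lemma gx_borel: "gx x \<in> borel_measurable borel"
  unfolding gx_def by measurable

lemma subsphere_borel: "subsphere x \<in> sets borel"
  unfolding subsphere_def by measurable

lemma usphere_borel: "usphere \<in> sets borel"
  unfolding usphere_def by measurable

lemma gx_in:
  assumes x: "norm x = 1" and p: "p \<in> cyl x"
  shows "gx x p \<in> subsphere x"
proof -
  let ?q = "p - (x \<bullet> p) *\<^sub>R x"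
  have q0: "norm ?q > 0" using p by (simp add: cyl_def)
  have xx: "x \<bullet> x = 1" using x by (simp add: norm_eq_1)
  have "x \<bullet> ?q = 0" using xx by (simp add: inner_diff_right)
  then show ?thesis using q0
    by (simp add: gx_def subsphere_def)
qed

lemma cone_eq:
  assumes x: "norm x = 1" and B: "B \<subseteq> subsphere x"
  shows "cone_cyl x B = cyl x \<inter> gx x -` B"
proof (intro equalityI subsetI)
  have xx: "x \<bullet> x = 1" using x by (simp add: norm_eq_1)
  fix p assume "p \<in> cone_cyl x B"
  then obtain z t s where p: "p = t *\<^sub>R z + s *\<^sub>R x" and z: "z \<in> B" and t: "0 < t" "t \<le> 1"
    and s: "0 \<le> s" "s \<le> 1"
    unfolding cone_cyl_def by blast
  have zs: "norm z = 1" "x \<bullet> z = 0" using z B by (auto simp: subsphere_def)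
  have "x \<bullet> p = t * (x \<bullet> z) + s * (x \<bullet> x)" by (simp add: p inner_add_right)
  then have xp: "x \<bullet> p = s" using zs xx by simp
  have q: "p - s *\<^sub>R x = t *\<^sub>R z" by (simp add: p)
  have nq: "norm (p - s *\<^sub>R x) = t" using t zs by (simp add: q)
  have "gx x p = z" using t zs by (simp add: gx_def xp q nq)
  moreover have "p \<in> cyl x"
    unfolding cyl_def using t s nq by (auto simp: xp)
  ultimately show "p \<in> cyl x \<inter> gx x -` B"
    using z by simp
next
  fix p assume p: "p \<in> cyl x \<inter> gx x -` B"
  let ?q = "p - (x \<bullet> p) *\<^sub>R x"
  let ?t = "norm ?q"
  have t: "0 < ?t" "?t \<le> 1" "0 \<le> x \<bullet> p" "x \<bullet> p \<le> 1" using p by (auto simp: cyl_def)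
  have "p = ?t *\<^sub>R gx x p + (x \<bullet> p) *\<^sub>R x"
    using t by (simp add: gx_def)
  moreover have "gx x p \<in> B" using p by simp
  ultimately show "p \<in> cone_cyl x B"
    unfolding cone_cyl_def using t by blast
qed

lemma space_Mx: "space (Mx x) = cyl x"
  by (simp add: Mx_def space_restrict_space)

lemma sets_Mx: "sets (Mx x) = sets (restrict_space lborel (cyl x))"
  by (simp add: Mx_def)

lemma gx_meas:
  assumes x: "norm x = 1"
  shows "gx x \<in> measurable (Mx x) (restrict_space borel (subsphere x))"
proof (rule measurable_restrict_space2)
  show "gx x \<in> space (Mx x) \<rightarrow> subsphere x"
    using gx_in[OF x] by (auto simp: space_Mx)
  have "gx x \<in> measurable (restrict_space lborel (cyl x)) borel"
    using gx_borel by (intro measurable_restrict_space1) simp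
  then show "gx x \<in> borel_measurable (Mx x)"
    using sets_Mx measurable_cong_sets by blast
qed

lemma sub_surface_eq:
  assumes x: "norm x = 1"
  shows "sub_surface x = distr (Mx x) (restrict_space borel (subsphere x)) (gx x)"
    (is "_ = ?N")
proof -
  have sp: "space ?N = subsphere x" by (simp add: space_restrict_space)
  have st: "sets ?N = sets (restrict_space borel (subsphere x))" by simp
  have "?N = measure_of (space ?N) (sets ?N) (emeasure ?N)"
    by (rule measure_of_of_measure[symmetric])
  also have "\<dots> = measure_of (subsphere x) (sets (restrict_space borel (subsphere x))) (emeasure ?N)"
    by (simp only: sp st)
  also have "\<dots> = sub_surface x"
    unfolding sub_surface_def
  proof (rule measure_of_eq)
    show "sets (restrict_space borel (subsphere x)) \<subseteq> Pow (subsphere x)"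
      using sets.space_closed[of "restrict_space borel (subsphere x)"]
      by (simp add: space_restrict_space)
    fix a assume "a \<in> sigma_sets (subsphere x) (sets (restrict_space borel (subsphere x)))"
    then have a: "a \<in> sets (restrict_space borel (subsphere x))"
      using sets.sigma_sets_eq[of "restrict_space borel (subsphere x)"]
      by (simp add: space_restrict_space)
    then have aS: "a \<subseteq> subsphere x" and ab: "a \<in> sets borel"
      using sets_restrict_space_iff[of "subsphere x" borel a] subsphere_borel by auto
    have pre: "gx x -` a \<inter> space (Mx x) \<in> sets (restrict_space lborel (cyl x))"
      using measurable_sets[OF gx_meas[OF x] a] unfolding sets_Mx .
    have "gx x -` a \<in> sets borel" using measurable_sets_borel[OF gx_borel ab] .
    then have pre2: "gx x -` a \<inter> cyl x \<in> sets lborel"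
      using cyl_borel[of x] by (simp add: sets.Int)
    have "emeasure ?N a = emeasure (Mx x) (gx x -` a \<inter> space (Mx x))"
      using a gx_meas[OF x] by (simp add: emeasure_distr)
    also have "\<dots> = of_nat (DIM('a) - 1) * emeasure (restrict_space lborel (cyl x)) (gx x -` a \<inter> cyl x)"
      using pre unfolding Mx_def by (simp add: emeasure_density_const space_restrict_space)
    also have "\<dots> = of_nat (DIM('a) - 1) * emeasure lborel (gx x -` a \<inter> cyl x)"
      using cyl_borel by (subst emeasure_restrict_space) auto
    also have "\<dots> = of_nat (DIM('a) - 1) * emeasure lborel (cone_cyl x a)"
      using cone_eq[OF x aS] by (simp add: Int_commute)
    finally show "emeasure ?N a = of_nat (DIM('a) - 1) * emeasure lborel (cone_cyl x a)" .
  qed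
  finally show ?thesis ..
qed

lemma sets_sub_surface: "norm x = 1 \<Longrightarrow> sets (sub_surface x) = sets (restrict_space borel (subsphere x))"
  by (simp add: sub_surface_eq)

lemma space_sub_surface: "norm x = 1 \<Longrightarrow> space (sub_surface x) = subsphere x"
  by (simp add: sub_surface_eq space_restrict_space)

lemma surf_int:
  fixes f :: "'a::euclidean_space \<Rightarrow> ennreal"
  assumes x: "norm x = 1" and f: "f \<in> borel_measurable borel"
  shows "(\<integral>\<^sup>+z. f z \<partial>sub_surface x) = of_nat (DIM('a) - 1) * (\<integral>\<^sup>+p. indicator (cyl x) p * f (gx x p) \<partial>lborel)"
proof -
  have fr: "f \<in> borel_measurable (restrict_space borel (subsphere x))"
    using f by (rule measurable_restrict_space1)
  have fg: "(\<lambda>p. f (gx x p)) \<in> borel_measurable lborel"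
    using measurable_comp[OF gx_borel f] by (simp add: o_def)
  have "(\<integral>\<^sup>+z. f z \<partial>sub_surface x) = (\<integral>\<^sup>+p. f (gx x p) \<partial>Mx x)"
    unfolding sub_surface_eq[OF x]
    by (rule nn_integral_distr[OF gx_meas[OF x]]) (simp add: fr)
  also have "\<dots> = (\<integral>\<^sup>+p. of_nat (DIM('a) - 1) * f (gx x p) \<partial>restrict_space lborel (cyl x))"
    unfolding Mx_def
    by (rule nn_integral_density) (auto intro: measurable_restrict_space1 fg)
  also have "\<dots> = (\<integral>\<^sup>+p. of_nat (DIM('a) - 1) * f (gx x p) * indicator (cyl x) p \<partial>lborel)"
    using cyl_borel by (subst nn_integral_restrict_space) auto
  also have "\<dots> = (\<integral>\<^sup>+p. of_nat (DIM('a) - 1) * (indicator (cyl x) p * f (gx x p)) \<partial>lborel)"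
    by (simp add: mult_ac)
  also have "\<dots> = of_nat (DIM('a) - 1) * (\<integral>\<^sup>+p. indicator (cyl x) p * f (gx x p) \<partial>lborel)"
    using fg cyl_borel by (intro nn_integral_cmult borel_measurable_times_ennreal borel_measurable_indicator) auto
  finally show ?thesis .
qed


lemma orth_inner: "orthogonal_transformation T \<Longrightarrow> T v \<bullet> T w = v \<bullet> w"
  by (simp add: orthogonal_transformation_def)

lemma orth_cyl:
  assumes T: "orthogonal_transformation T" and y: "T x = y"
  shows "T p \<in> cyl y \<longleftrightarrow> p \<in> cyl x" and "gx y (T p) = T (gx x p)"
proof -
  have lin: "linear T" using T orthogonal_transformation_linear by blast
  have yp: "y \<bullet> T p = x \<bullet> p" using orth_inner[OF T] y by metis
  have q: "T p - (y \<bullet> T p) *\<^sub>R y = T (p - (x \<bullet> p) *\<^sub>R x)"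
    using lin y yp by (simp add: linear_diff linear_scale)
  have nq: "norm (T p - (y \<bullet> T p) *\<^sub>R y) = norm (p - (x \<bullet> p) *\<^sub>R x)"
    using q T orthogonal_transformation_norm by metis
  then have nq': "norm (T p - (x \<bullet> p) *\<^sub>R y) = norm (p - (x \<bullet> p) *\<^sub>R x)"
    by (simp only: yp)
  show "T p \<in> cyl y \<longleftrightarrow> p \<in> cyl x"
    unfolding cyl_def mem_Collect_eq yp nq' by (rule refl)
  show "gx y (T p) = T (gx x p)"
    unfolding gx_def using nq q lin by (simp add: linear_scale)
qed

lemma surf_rot:
  fixes f :: "'a::euclidean_space \<Rightarrow> ennreal" and x :: 'a
  assumes x: "norm x = 1" and T: "orthogonal_transformation T" and y: "T x = y"
    and f: "f \<in> borel_measurable borel"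
  shows "(\<integral>\<^sup>+z. f (T z) \<partial>sub_surface x) = (\<integral>\<^sup>+z. f z \<partial>sub_surface y)"
proof -
  have ny: "norm y = 1" using x T y orthogonal_transformation_norm by metis
  have mT: "T \<in> borel_measurable borel"
    using T linear_borel orthogonal_transformation_linear by blast
  have fT: "(\<lambda>z. f (T z)) \<in> borel_measurable borel"
    using measurable_comp[OF mT f] by (simp add: o_def)
  define G where "G q = indicator (cyl y) q * f (gx y q)" for q
  have mG: "G \<in> borel_measurable borel"
    unfolding G_def using measurable_comp[OF gx_borel f] cyl_borel
    by (intro borel_measurable_times_ennreal borel_measurable_indicator) (auto simp: o_def)
  have "(\<integral>\<^sup>+z. f (T z) \<partial>sub_surface x) = of_nat (DIM('a) - 1) * (\<integral>\<^sup>+p. indicator (cyl x) p * f (T (gx x p)) \<partial>lborel)"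
    using surf_int[OF x fT] by simp
  also have "(\<integral>\<^sup>+p. indicator (cyl x) p * f (T (gx x p)) \<partial>lborel) = (\<integral>\<^sup>+p. G (T p) \<partial>lborel)"
    unfolding G_def using orth_cyl[OF T y] by (simp add: indicator_def)
  also have "\<dots> = (\<integral>\<^sup>+q. G q \<partial>distr lborel borel T)"
    using mT mG by (subst nn_integral_distr) auto
  also have "\<dots> = (\<integral>\<^sup>+q. G q \<partial>lborel)"
    by (simp add: distr_orth[OF T])
  also have "of_nat (DIM('a) - 1) * \<dots> = (\<integral>\<^sup>+z. f z \<partial>sub_surface y)"
    unfolding G_def by (rule surf_int[OF ny f, symmetric])
  finally show ?thesis .
qed

lemma surf_total:
  fixes x :: "'a::euclidean_space"
  assumes x: "norm x = 1"
  shows "emeasure (sub_surface x) (subsphere x) = of_nat (DIM('a) - 1) * emeasure lborel (cyl x)"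
proof -
  have "emeasure (sub_surface x) (subsphere x) = (\<integral>\<^sup>+z. 1 \<partial>sub_surface x)"
    by (simp add: space_sub_surface[OF x])
  also have "\<dots> = of_nat (DIM('a) - 1) * (\<integral>\<^sup>+p. indicator (cyl x) p * 1 \<partial>lborel)"
    using surf_int[OF x, of "\<lambda>_. 1"] by simp
  also have "\<dots> = of_nat (DIM('a) - 1) * emeasure lborel (cyl x)"
  proof -
    have "cyl x \<in> sets lborel" using cyl_borel by simp
    then show ?thesis by simp
  qed
  finally show ?thesis .
qed

lemma cyl_sub: fixes x :: "'a::euclidean_space" assumes x: "norm x = 1" shows "cyl x \<subseteq> cball 0 2"
proof
  fix p assume p: "p \<in> cyl x"
  have "norm p \<le> norm (p - (x \<bullet> p) *\<^sub>R x) + norm ((x \<bullet> p) *\<^sub>R x)"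
    using norm_triangle_ineq[of "p - (x \<bullet> p) *\<^sub>R x" "(x \<bullet> p) *\<^sub>R x"] by simp
  also have "\<dots> \<le> 1 + 1" using p x by (intro add_mono) (auto simp: cyl_def)
  finally show "p \<in> cball 0 2" by simp
qed

lemma unit_orth_exists:
  fixes x :: "'a::euclidean_space"
  assumes "DIM('a) \<ge> 2"
  obtains e where "norm e = 1" "x \<bullet> e = 0"
proof -
  have "dim {x} < DIM('a)"
    using assms dim_le_card'[of "{x}"] by simp
  then obtain v where v: "v \<noteq> 0" "\<And>y. y \<in> span {x} \<Longrightarrow> orthogonal v y"
    using orthogonal_to_subspace_exists by blast
  have "x \<bullet> v = 0" using v(2)[of x] by (simp add: span_base orthogonal_def inner_commute)
  then show ?thesis using v(1)
    by (intro that[of "(1 / norm v) *\<^sub>R v"]) auto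
qed

lemma cyl_pos:
  fixes x :: "'a::euclidean_space"
  assumes x: "norm x = 1" and d: "DIM('a) \<ge> 2"
  shows "0 < emeasure lborel (cyl x)"
proof -
  obtain e :: 'a where e: "norm e = 1" "x \<bullet> e = 0" using unit_orth_exists[OF d] by blast
  let ?c = "(1/2) *\<^sub>R x + (1/2) *\<^sub>R e"
  have xx: "x \<bullet> x = 1" using x by (simp add: norm_eq_1)
  have "ball ?c (1/4) \<subseteq> cyl x"
  proof
    fix p assume "p \<in> ball ?c (1/4)"
    then have nv0: "norm (p - ?c) < 1/4" by (simp add: dist_norm norm_minus_commute)
    define v where "v = p - ?c"
    have nv: "norm v < 1/4" using nv0 by (simp add: v_def)
    have pv: "p = ?c + v" by (simp add: v_def)
    have xv: "\<bar>x \<bullet> v\<bar> \<le> norm v" using Cauchy_Schwarz_ineq2[of x v] x by simp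
    have "x \<bullet> p = (1/2) * (x \<bullet> x) + (1/2) * (x \<bullet> e) + x \<bullet> v"
      by (simp add: pv inner_add_right)
    then have xp: "x \<bullet> p = 1/2 + x \<bullet> v"
      using xx e by simp
    have q: "p - (x \<bullet> p) *\<^sub>R x = (1/2) *\<^sub>R e + (v - (x \<bullet> v) *\<^sub>R x)"
      unfolding xp by (simp add: pv algebra_simps)
    have nw: "norm (v - (x \<bullet> v) *\<^sub>R x) \<le> 2 * norm v"
    proof -
      have "norm (v - (x \<bullet> v) *\<^sub>R x) \<le> norm v + norm ((x \<bullet> v) *\<^sub>R x)" by (rule norm_triangle_ineq4)
      also have "norm ((x \<bullet> v) *\<^sub>R x) = \<bar>x \<bullet> v\<bar>" using x by simp
      finally show ?thesis using xv by simp
    qed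
    have n1: "norm (p - (x \<bullet> p) *\<^sub>R x) \<le> 1/2 + 2 * norm v"
      using norm_triangle_ineq[of "(1/2) *\<^sub>R e" "v - (x \<bullet> v) *\<^sub>R x"] nw e unfolding q by simp
    have n2: "1/2 - 2 * norm v \<le> norm (p - (x \<bullet> p) *\<^sub>R x)"
      using norm_diff_ineq[of "(1/2) *\<^sub>R e" "v - (x \<bullet> v) *\<^sub>R x"] nw e unfolding q by simp
    have c1: "0 < norm (p - (x \<bullet> p) *\<^sub>R x)" using n2 nv by linarith
    have c2: "norm (p - (x \<bullet> p) *\<^sub>R x) \<le> 1" using n1 nv by linarith
    have c3: "0 \<le> x \<bullet> p" "x \<bullet> p \<le> 1" using xp xv nv by linarith+
    show "p \<in> cyl x"
      unfolding cyl_def mem_Collect_eq using c1 c2 c3 by blast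
  qed
  then have "emeasure lborel (ball ?c (1/4)) \<le> emeasure lborel (cyl x)"
    using cyl_borel by (intro emeasure_mono) auto
  moreover have "0 < emeasure lborel (ball ?c (1/4))"
    by (simp add: emeasure_ball)
  ultimately show ?thesis by simp
qed

lemma surf_total_fin:
  fixes x :: "'a::euclidean_space"
  assumes x: "norm x = 1" and d: "DIM('a) \<ge> 2"
  obtains c where "emeasure (sub_surface x) (subsphere x) = ennreal c" "0 < c"
proof -
  have fin: "emeasure lborel (cyl x) < \<infinity>"
    using emeasure_mono[OF cyl_sub[OF x], of lborel] emeasure_lborel_cball_finite[of "0::'a" 2]
    by simp
  have "emeasure (sub_surface x) (subsphere x) < \<infinity>"
    using fin by (simp add: surf_total[OF x] ennreal_mult_less_top of_nat_less_top)
  moreover have "0 < emeasure (sub_surface x) (subsphere x)"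
    using cyl_pos[OF x d] d by (simp add: surf_total[OF x] ennreal_zero_less_mult_iff)
  ultimately show ?thesis
    by (metis ennreal_cases ennreal_less_zero_iff that top.extremum_strict)
qed


definition rot :: "'a::euclidean_space \<Rightarrow> 'a \<Rightarrow> real \<Rightarrow> real \<Rightarrow> 'a \<Rightarrow> 'a" where
  "rot x e c s v = v + ((c - 1) * (x \<bullet> v) - s * (e \<bullet> v)) *\<^sub>R x + (s * (x \<bullet> v) + (c - 1) * (e \<bullet> v)) *\<^sub>R e"

definition refl2 :: "'a::euclidean_space \<Rightarrow> 'a \<Rightarrow> 'a \<Rightarrow> 'a" where
  "refl2 e f v = v - ((e - f) \<bullet> v) *\<^sub>R (e - f)"

lemma norm_comb:
  fixes x e :: "'a::euclidean_space"
  assumes x: "norm x = 1" and e: "norm e = 1" and xe: "x \<bullet> e = 0"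
  shows "norm (a *\<^sub>R x + b *\<^sub>R e) = sqrt (a\<^sup>2 + b\<^sup>2)"
proof -
  have xx: "x \<bullet> x = 1" using x by (simp add: norm_eq_1)
  have ee: "e \<bullet> e = 1" using e by (simp add: norm_eq_1)
  have ex: "e \<bullet> x = 0" using xe by (simp add: inner_commute)
  have "(a *\<^sub>R x + b *\<^sub>R e) \<bullet> (a *\<^sub>R x + b *\<^sub>R e) = a\<^sup>2 + b\<^sup>2"
    by (simp add: inner_add_left inner_add_right xx ee xe ex power2_eq_square)
  then show ?thesis by (simp add: norm_eq_sqrt_inner)
qed

lemma rot_linear: "linear (rot x e c s)"
proof (rule linearI)
  fix v w :: 'a and r :: real
  show "rot x e c s (v + w) = rot x e c s v + rot x e c s w"
    unfolding rot_def by (simp add: inner_add_right algebra_simps)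
  show "rot x e c s (r *\<^sub>R v) = r *\<^sub>R rot x e c s v"
    unfolding rot_def by (simp add: algebra_simps)
qed

lemma rot_orth:
  fixes x e :: "'a::euclidean_space"
  assumes x: "norm x = 1" and e: "norm e = 1" and xe: "x \<bullet> e = 0" and cs: "c\<^sup>2 + s\<^sup>2 = 1"
  shows "orthogonal_transformation (rot x e c s)"
proof -
  have xx: "x \<bullet> x = 1" using x by (simp add: norm_eq_1)
  have ee: "e \<bullet> e = 1" using e by (simp add: norm_eq_1)
  have ex: "e \<bullet> x = 0" using xe by (simp add: inner_commute)
  have "rot x e c s v \<bullet> rot x e c s v = v \<bullet> v" for v
  proof -
    define a b where "a = x \<bullet> v" and "b = e \<bullet> v"
    have va: "v \<bullet> x = a" "v \<bullet> e = b" by (simp_all add: a_def b_def inner_commute)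
    have "rot x e c s v \<bullet> rot x e c s v = v \<bullet> v + 2 * ((c - 1) * a - s * b) * a + 2 * (s * a + (c - 1) * b) * b
        + ((c - 1) * a - s * b)\<^sup>2 + (s * a + (c - 1) * b)\<^sup>2"
      unfolding rot_def a_def[symmetric] b_def[symmetric]
      by (simp add: inner_add_left inner_add_right xx ee xe ex va a_def[symmetric] b_def[symmetric] power2_eq_square algebra_simps)
    also have "\<dots> = v \<bullet> v" using cs by algebra
    finally show ?thesis .
  qed
  then have "norm (rot x e c s v) = norm v" for v by (simp add: norm_eq_sqrt_inner)
  then show ?thesis using rot_linear by (simp add: orthogonal_transformation)
qed

lemma rot_x:
  assumes x: "norm x = 1" and xe: "x \<bullet> e = 0"
  shows "rot x e c s x = c *\<^sub>R x + s *\<^sub>R e"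
proof -
  have xx: "x \<bullet> x = 1" using x by (simp add: norm_eq_1)
  have ex: "e \<bullet> x = 0" using xe by (simp add: inner_commute)
  show ?thesis unfolding rot_def by (simp add: xx ex algebra_simps)
qed

lemma refl2_orth:
  fixes e f :: "'a::euclidean_space"
  assumes e: "norm e = 1" and f: "norm f = 1" and ef: "e \<bullet> f = 0"
  shows "orthogonal_transformation (refl2 e f)"
proof -
  have ee: "e \<bullet> e = 1" using e by (simp add: norm_eq_1)
  have ff: "f \<bullet> f = 1" using f by (simp add: norm_eq_1)
  have fe: "f \<bullet> e = 0" using ef by (simp add: inner_commute)
  have uu: "(e - f) \<bullet> (e - f) = 2" by (simp add: inner_diff_left inner_diff_right ee ff ef fe)
  have lin: "linear (refl2 e f)"
    by (rule linearI) (simp_all add: refl2_def inner_add_right algebra_simps)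
  have "refl2 e f v \<bullet> refl2 e f v = v \<bullet> v" for v
  proof -
    define u where "u = e - f"
    define t where "t = u \<bullet> v"
    have vt: "v \<bullet> u = t" by (simp add: t_def inner_commute)
    have uu': "u \<bullet> u = 2" using uu by (simp add: u_def)
    have r: "refl2 e f v = v - t *\<^sub>R u" by (simp add: refl2_def u_def t_def)
    have "refl2 e f v \<bullet> refl2 e f v = v \<bullet> v - t * (v \<bullet> u) - t * (u \<bullet> v) + t * t * (u \<bullet> u)"
      unfolding r by (simp add: inner_diff_left inner_diff_right algebra_simps)
    also have "\<dots> = v \<bullet> v" using vt uu' by (simp add: t_def[symmetric])
    finally show ?thesis .
  qed
  then have "norm (refl2 e f v) = norm v" for v by (simp add: norm_eq_sqrt_inner)
  then show ?thesis using lin by (simp add: orthogonal_transformation)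
qed

lemma refl2_x:
  assumes "x \<bullet> e = 0" "x \<bullet> f = 0"
  shows "refl2 e f x = x"
proof -
  have "(e - f) \<bullet> x = x \<bullet> e - x \<bullet> f"
    by (metis inner_commute inner_diff_left)
  then show ?thesis using assms by (simp add: refl2_def)
qed

lemma refl2_e:
  fixes e f :: "'a::euclidean_space"
  assumes e: "norm e = 1" and f: "norm f = 1" and ef: "e \<bullet> f = 0"
  shows "e \<bullet> refl2 e f z = f \<bullet> z"
proof -
  have ee: "e \<bullet> e = 1" using e by (simp add: norm_eq_1)
  show ?thesis unfolding refl2_def
    by (simp add: inner_diff_left inner_diff_right ee ef algebra_simps)
qed

lemma sqrt_bound: "0 \<le> u \<Longrightarrow> sqrt u \<le> (4/7) * u + 7/16"
proof -
  assume u: "0 \<le> u"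
  have "0 \<le> (sqrt u - 7/8)\<^sup>2" by simp
  also have "(sqrt u - 7/8)\<^sup>2 = u - (7/4) * sqrt u + 49/64"
    using u by (simp add: power2_eq_square algebra_simps)
  finally show ?thesis by simp
qed

lemma pointwise_bound:
  fixes x e z :: "'a::euclidean_space"
  assumes x: "norm x = 1" and e: "norm e = 1" and xe: "x \<bullet> e = 0"
    and y: "y = c *\<^sub>R x + s *\<^sub>R e" and xz: "x \<bullet> z = 0"
  shows "dist (cos w *\<^sub>R x + sin w *\<^sub>R z) (cos w *\<^sub>R y + sin w *\<^sub>R rot x e c s z)
           \<le> dist x y * ((4/7) * ((cos w)\<^sup>2 + (e \<bullet> z)\<^sup>2 * (sin w)\<^sup>2) + 7/16)"
proof -
  define a where "a = e \<bullet> z"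
  define al where "al = cos w * (1 - c) + sin w * s * a"
  define be where "be = - cos w * s + sin w * (1 - c) * a"
  have V: "(cos w *\<^sub>R x + sin w *\<^sub>R z) - (cos w *\<^sub>R y + sin w *\<^sub>R rot x e c s z) = al *\<^sub>R x + be *\<^sub>R e"
    unfolding rot_def y al_def be_def a_def[symmetric] using xz
    by (simp add: algebra_simps)
  have xy: "x - y = (1 - c) *\<^sub>R x + (- s) *\<^sub>R e"
    unfolding y by (simp add: algebra_simps)
  have "al\<^sup>2 + be\<^sup>2 = ((1 - c)\<^sup>2 + (- s)\<^sup>2) * ((cos w)\<^sup>2 + a\<^sup>2 * (sin w)\<^sup>2)"
    unfolding al_def be_def by (simp add: power2_eq_square algebra_simps)
  then have "dist (cos w *\<^sub>R x + sin w *\<^sub>R z) (cos w *\<^sub>R y + sin w *\<^sub>R rot x e c s z)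
      = dist x y * sqrt ((cos w)\<^sup>2 + a\<^sup>2 * (sin w)\<^sup>2)"
    unfolding dist_norm V xy norm_comb[OF x e xe] by (simp add: real_sqrt_mult)
  also have "\<dots> \<le> dist x y * ((4/7) * ((cos w)\<^sup>2 + a\<^sup>2 * (sin w)\<^sup>2) + 7/16)"
    by (intro mult_left_mono sqrt_bound) auto
  finally show ?thesis by (simp add: a_def)
qed

lemma frame_exists:
  fixes x y :: "'a::euclidean_space"
  assumes x: "norm x = 1" and y: "norm y = 1" and d: "DIM('a) \<ge> 2"
  obtains e where "norm e = 1" "x \<bullet> e = 0" "y = (x \<bullet> y) *\<^sub>R x + (e \<bullet> y) *\<^sub>R e"
proof (cases "y - (x \<bullet> y) *\<^sub>R x = 0")
  case True
  obtain e where e: "norm e = 1" "x \<bullet> e = 0" using unit_orth_exists[OF d] by blast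
  have yx: "y = (x \<bullet> y) *\<^sub>R x" using True by simp
  have "e \<bullet> y = 0" using e by (subst yx) (simp add: inner_commute)
  then show ?thesis using e yx by (intro that[of e]) auto
next
  case False
  define w where "w = y - (x \<bullet> y) *\<^sub>R x"
  define e where "e = (1 / norm w) *\<^sub>R w"
  have xx: "x \<bullet> x = 1" using x by (simp add: norm_eq_1)
  have nw: "norm w > 0" using False by (simp add: w_def)
  have xw: "x \<bullet> w = 0" by (simp add: w_def inner_diff_right xx)
  have ne: "norm e = 1" using nw by (simp add: e_def)
  have xe: "x \<bullet> e = 0" using xw by (simp add: e_def)
  have we: "w = norm w *\<^sub>R e" using nw by (simp add: e_def)
  have ee: "e \<bullet> e = 1" using ne by (simp add: norm_eq_1)
  have ey: "e \<bullet> y = norm w"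
  proof -
    have "y = (x \<bullet> y) *\<^sub>R x + norm w *\<^sub>R e" using we by (simp add: w_def)
    then have "e \<bullet> y = (x \<bullet> y) * (e \<bullet> x) + norm w * (e \<bullet> e)"
      by (metis inner_add_right inner_scaleR_right)
    then show ?thesis using xe ee by (simp add: inner_commute)
  qed
  have "y = (x \<bullet> y) *\<^sub>R x + (e \<bullet> y) *\<^sub>R e" using we ey by (simp add: w_def)
  then show ?thesis using ne xe by (intro that[of e]) auto
qed

lemma second_orth_exists:
  fixes x e :: "'a::euclidean_space"
  assumes d: "DIM('a) \<ge> 3"
  obtains f where "norm f = 1" "x \<bullet> f = 0" "e \<bullet> f = 0"
proof -
  have "dim {x, e} \<le> card {x, e}" by (rule dim_le_card') simp
  also have "card {x, e} \<le> 2" by (simp add: card_insert_le_m1)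
  finally have "dim {x, e} < DIM('a)" using d by simp
  then obtain v where v: "v \<noteq> 0" "\<And>y. y \<in> span {x, e} \<Longrightarrow> orthogonal v y"
    using orthogonal_to_subspace_exists by blast
  have "x \<bullet> v = 0" "e \<bullet> v = 0"
    using v(2)[of x] v(2)[of e] by (simp_all add: span_base orthogonal_def inner_commute)
  then show ?thesis using v(1)
    by (intro that[of "(1 / norm v) *\<^sub>R v"]) auto
qed


lemma omega_int:
  fixes L a :: real
  assumes L: "0 \<le> L"
  shows "(\<integral>\<^sup>+w. ennreal (indicator {0..2*pi} w * (L * ((4/7) * ((cos w)\<^sup>2 + a\<^sup>2 * (sin w)\<^sup>2) + 7/16))) \<partial>lborel)
         = ennreal (L * ((4/7) * (pi + a\<^sup>2 * pi) + 7/8 * pi))"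
proof -
  define h where "h w = L * ((4/7) * ((cos w)\<^sup>2 + a\<^sup>2 * (sin w)\<^sup>2) + 7/16)" for w
  define H where "H w = L * ((4/7) * ((w + sin w * cos w) / 2 + a\<^sup>2 * ((w - sin w * cos w) / 2)) + 7/16 * w)" for w
  have cc: "cos w * cos w = 1 - sin w * sin w" for w :: real
    using sin_cos_squared_add3[of w] by linarith
  have D: "(H has_real_derivative h w) (at w)" for w
    unfolding H_def h_def
    apply (auto intro!: derivative_eq_intros simp: power2_eq_square field_simps)
    using sin_cos_squared_add3[of w] by algebra
  have "(h has_integral (H (2*pi) - H 0)) {0..2*pi}"
    by (rule fundamental_theorem_of_calculus)
      (auto intro: has_field_derivative_at_within D simp: has_real_derivative_iff_has_vector_derivative[symmetric])
  moreover have "H (2*pi) - H 0 = L * ((4/7) * (pi + a\<^sup>2 * pi) + 7/8 * pi)"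
    by (simp add: H_def algebra_simps)
  ultimately have hi: "(h has_integral L * ((4/7) * (pi + a\<^sup>2 * pi) + 7/8 * pi)) {0..2*pi}" by simp
  have eq: "(\<lambda>w. indicator {0..2*pi} w * h w) = (\<lambda>w. if w \<in> {0..2*pi} then h w else 0)"
    by (auto simp: indicator_def)
  have hi2: "((\<lambda>w. indicator {0..2*pi} w * h w) has_integral L * ((4/7) * (pi + a\<^sup>2 * pi) + 7/8 * pi)) UNIV"
    unfolding eq has_integral_restrict_UNIV by (rule hi)
  have "(\<integral>\<^sup>+w. ennreal (indicator {0..2*pi} w * h w) \<partial>lborel) = ennreal (L * ((4/7) * (pi + a\<^sup>2 * pi) + 7/8 * pi))"
    by (rule nn_integral_has_integral_lborel[OF _ _ hi2]) (auto simp: h_def L)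
  then show ?thesis by (simp add: h_def)
qed


definition Fk :: "'a::euclidean_space \<Rightarrow> 'a \<times> real \<Rightarrow> 'a" where
  "Fk x q = cos (snd q) *\<^sub>R x + sin (snd q) *\<^sub>R fst q"

definition Dn :: "'a::euclidean_space \<Rightarrow> ennreal" where
  "Dn x = ennreal (2 * pi) * emeasure (sub_surface x) (subsphere x)"

definition Kx :: "'a::euclidean_space \<Rightarrow> ('a \<times> real) measure" where
  "Kx x = density (sub_surface x \<Otimes>\<^sub>M lborel) (\<lambda>q. indicator {0..2*pi} (snd q) / Dn x)"

lemma borel_pairI:
  fixes f :: "'a::euclidean_space \<times> real \<Rightarrow> 'c"
  shows "f \<in> measurable (borel \<Otimes>\<^sub>M borel) N \<Longrightarrow> f \<in> measurable borel N"
  by (simp add: borel_prod)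

lemma Fk_borel: "Fk x \<in> borel_measurable borel"
  by (rule borel_pairI) (unfold Fk_def, measurable)

lemma id_sub_surface: "norm x = 1 \<Longrightarrow> (\<lambda>z. z) \<in> measurable (sub_surface x) borel"
proof -
  assume x: "norm x = 1"
  have "(\<lambda>z. z) \<in> measurable (restrict_space borel (subsphere x)) borel"
    by (rule measurable_restrict_space1) simp
  then show ?thesis using measurable_cong_sets[OF sets_sub_surface[OF x] refl] by blast
qed

lemma pair_meas:
  assumes x: "norm x = 1" and f: "f \<in> measurable borel N"
  shows "f \<in> measurable (sub_surface x \<Otimes>\<^sub>M lborel) N"
proof -
  have "(\<lambda>q. (fst q, snd q)) \<in> measurable (sub_surface x \<Otimes>\<^sub>M lborel) (borel \<Otimes>\<^sub>M borel)"
  proof (rule measurable_Pair)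
    show "fst \<in> measurable (sub_surface x \<Otimes>\<^sub>M lborel) borel"
      using measurable_comp[OF measurable_fst id_sub_surface[OF x]] by (simp add: o_def)
    show "snd \<in> measurable (sub_surface x \<Otimes>\<^sub>M lborel) borel"
      using measurable_snd[of "sub_surface x" lborel] by simp
  qed
  then have "(\<lambda>q. q) \<in> measurable (sub_surface x \<Otimes>\<^sub>M lborel) borel"
    by (simp add: borel_prod)
  then show ?thesis using measurable_comp[OF _ f] by (simp add: o_def)
qed

lemma space_pair_sub: "norm x = 1 \<Longrightarrow> space (sub_surface x \<Otimes>\<^sub>M lborel) = subsphere x \<times> UNIV"
  by (simp add: space_pair_measure space_sub_surface)

lemma sph_sets: "A \<in> sets sph_space \<Longrightarrow> A \<in> sets borel \<and> A \<subseteq> usphere"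
  unfolding sph_space_def using sets_restrict_space_iff[of usphere borel A] usphere_borel by auto

lemma Fk_in:
  assumes x: "norm x = 1" and z: "z \<in> subsphere x"
  shows "Fk x (z, w) \<in> usphere"
proof -
  have "norm z = 1" "x \<bullet> z = 0" using z by (auto simp: subsphere_def)
  then have "norm (cos w *\<^sub>R x + sin w *\<^sub>R z) = sqrt ((cos w)\<^sup>2 + (sin w)\<^sup>2)"
    using norm_comb[OF x] by blast
  then show ?thesis by (simp add: Fk_def usphere_def)
qed

lemma sets_Kx: "sets (Kx x) = sets (sub_surface x \<Otimes>\<^sub>M lborel)"
  by (simp add: Kx_def)

lemma space_Kx: "space (Kx x) = space (sub_surface x \<Otimes>\<^sub>M lborel)"
  by (simp add: Kx_def)

lemma Kx_meas_iff: "f \<in> measurable (Kx x) N \<longleftrightarrow> f \<in> measurable (sub_surface x \<Otimes>\<^sub>M lborel) N"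
  using measurable_cong_sets[OF sets_Kx refl] by blast

lemma sph_meas:
  assumes x: "norm x = 1" and f: "f \<in> borel_measurable borel"
    and inS: "\<And>z w. z \<in> subsphere x \<Longrightarrow> f (z, w) \<in> usphere"
  shows "f \<in> measurable (Kx x) sph_space"
  unfolding Kx_meas_iff sph_space_def
proof (rule measurable_restrict_space2)
  show "f \<in> space (sub_surface x \<Otimes>\<^sub>M lborel) \<rightarrow> usphere"
    using inS by (auto simp: space_pair_sub[OF x])
  show "f \<in> borel_measurable (sub_surface x \<Otimes>\<^sub>M lborel)"
    by (rule pair_meas[OF x f])
qed

lemma KINT:
  fixes g :: "'a::euclidean_space \<times> real \<Rightarrow> ennreal"
  assumes x: "norm x = 1" and g: "g \<in> borel_measurable borel"
  shows "(\<integral>\<^sup>+q. g q \<partial>Kx x) = (\<integral>\<^sup>+z. \<integral>\<^sup>+w. indicator {0..2*pi} w * g (z, w) \<partial>lborel \<partial>sub_surface x) / Dn x"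
proof -
  have wm: "(\<lambda>q::'a \<times> real. indicator {0..2*pi} (snd q) / Dn x) \<in> borel_measurable borel"
    by (rule borel_pairI) measurable
  have g2: "g \<in> borel_measurable (borel \<Otimes>\<^sub>M borel)" using g by (simp add: borel_prod)
  have ig: "(\<lambda>q::'a \<times> real. indicator {0..2*pi} (snd q) * g q) \<in> borel_measurable borel"
    by (rule borel_pairI) (use g2 in measurable)
  have "(\<integral>\<^sup>+q. g q \<partial>Kx x) = (\<integral>\<^sup>+q. indicator {0..2*pi} (snd q) / Dn x * g q \<partial>(sub_surface x \<Otimes>\<^sub>M lborel))"
    unfolding Kx_def by (rule nn_integral_density) (auto intro: pair_meas[OF x] wm g)
  also have "\<dots> = (\<integral>\<^sup>+q. (indicator {0..2*pi} (snd q) * g q) * inverse (Dn x) \<partial>(sub_surface x \<Otimes>\<^sub>M lborel))"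
    by (simp add: divide_ennreal_def mult_ac)
  also have "\<dots> = (\<integral>\<^sup>+q. indicator {0..2*pi} (snd q) * g q \<partial>(sub_surface x \<Otimes>\<^sub>M lborel)) * inverse (Dn x)"
    by (rule nn_integral_multc) (rule pair_meas[OF x ig])
  also have "(\<integral>\<^sup>+q. indicator {0..2*pi} (snd q) * g q \<partial>(sub_surface x \<Otimes>\<^sub>M lborel))
      = (\<integral>\<^sup>+z. \<integral>\<^sup>+w. indicator {0..2*pi} w * g (z, w) \<partial>lborel \<partial>sub_surface x)"
    using sigma_finite_measure.nn_integral_fst[OF sigma_finite_lborel pair_meas[OF x ig]] by simp
  finally show ?thesis by (simp add: divide_ennreal_def)
qed

lemma emeasure_distr_int:
  assumes f: "f \<in> measurable M N" and A: "A \<in> sets N"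
  shows "emeasure (distr M N f) A = (\<integral>\<^sup>+q. indicator A (f q) \<partial>M)"
proof -
  have "emeasure (distr M N f) A = (\<integral>\<^sup>+p. indicator A p \<partial>distr M N f)"
    using A by simp
  also have "\<dots> = (\<integral>\<^sup>+q. indicator A (f q) \<partial>M)"
    using A f by (subst nn_integral_distr) auto
  finally show ?thesis .
qed

lemma gssP_eq:
  fixes x :: "'a::euclidean_space"
  assumes x: "norm x = 1"
  shows "gss_P x = distr (Kx x) sph_space (Fk x)"
    (is "_ = ?N")
proof -
  have Fm: "Fk x \<in> measurable (Kx x) sph_space"
    using sph_meas[OF x Fk_borel] Fk_in[OF x] by blast
  have sp: "space ?N = usphere" by (simp add: sph_space_def space_restrict_space)
  have st: "sets ?N = sets sph_space" by simp
  have "?N = measure_of (space ?N) (sets ?N) (emeasure ?N)"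
    by (rule measure_of_of_measure[symmetric])
  also have "\<dots> = measure_of usphere (sets sph_space) (emeasure ?N)"
    by (simp only: sp st)
  also have "\<dots> = gss_P x"
    unfolding gss_P_def
  proof (rule measure_of_eq)
    show "sets (sph_space :: 'a measure) \<subseteq> Pow usphere"
      using sets.space_closed[of "sph_space :: 'a measure"] by (simp add: sph_space_def space_restrict_space)
    fix A :: "'a set" assume "A \<in> sigma_sets usphere (sets sph_space)"
    then have A: "A \<in> sets sph_space"
      using sets.sigma_sets_eq[of "sph_space :: 'a measure"] by (simp add: sph_space_def space_restrict_space)
    have Ab: "A \<in> sets borel" using sph_sets[OF A] by blast
    have gm: "(\<lambda>q. indicator A (Fk x q) :: ennreal) \<in> borel_measurable borel"
      using measurable_comp[OF Fk_borel borel_measurable_indicator[OF Ab]] by (simp add: o_def)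
    have "emeasure ?N A = (\<integral>\<^sup>+q. indicator A (Fk x q) \<partial>Kx x)"
      by (rule emeasure_distr_int[OF Fm A])
    also have "\<dots> = (\<integral>\<^sup>+z. \<integral>\<^sup>+w. indicator {0..2*pi} w * indicator A (Fk x (z, w)) \<partial>lborel \<partial>sub_surface x) / Dn x"
      by (rule KINT[OF x gm])
    also have "\<dots> = gss_kernel x A"
      by (simp add: gss_kernel_def Fk_def Dn_def)
    finally show "emeasure ?N A = gss_kernel x A" .
  qed
  finally show ?thesis ..
qed


lemma surf_meas: "norm x = 1 \<Longrightarrow> f \<in> measurable borel N \<Longrightarrow> f \<in> measurable (sub_surface x) N"
  using measurable_comp[OF id_sub_surface] by (simp add: o_def)

lemma orth_sub:
  fixes T :: "'a::euclidean_space \<Rightarrow> 'a"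
  assumes T: "orthogonal_transformation T" and y: "T x = y" and z: "z \<in> subsphere x"
  shows "T z \<in> subsphere y"
proof -
  have "y \<bullet> T z = x \<bullet> z" using orth_inner[OF T] y by metis
  moreover have "norm (T z) = norm z" using orthogonal_transformation_norm[OF T] .
  ultimately show ?thesis using z by (auto simp: subsphere_def)
qed

lemma Dn_eq:
  fixes x :: "'a::euclidean_space" and T :: "'a \<Rightarrow> 'a"
  assumes x: "norm x = 1" and T: "orthogonal_transformation T" and y: "T x = y"
  shows "Dn x = Dn y"
proof -
  have ny: "norm y = 1" using x T y orthogonal_transformation_norm by metis
  have "emeasure (sub_surface x) (subsphere x) = (\<integral>\<^sup>+z. (\<lambda>_. 1) (T z) \<partial>sub_surface x)"
    by (simp add: space_sub_surface[OF x])
  also have "\<dots> = (\<integral>\<^sup>+z. 1 \<partial>sub_surface y)"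
    by (rule surf_rot[OF x T y]) simp
  also have "\<dots> = emeasure (sub_surface y) (subsphere y)"
    by (simp add: space_sub_surface[OF ny])
  finally show ?thesis by (simp add: Dn_def)
qed

lemma Gk_borel:
  fixes T :: "'a::euclidean_space \<Rightarrow> 'a"
  assumes T: "orthogonal_transformation T"
  shows "(\<lambda>q. Fk y (T (fst q), snd q)) \<in> borel_measurable borel"
proof -
  have mT[measurable]: "T \<in> borel_measurable borel"
    using T linear_borel orthogonal_transformation_linear by blast
  show ?thesis by (rule borel_pairI) (unfold Fk_def, measurable)
qed

lemma marg2:
  fixes x :: "'a::euclidean_space" and T :: "'a \<Rightarrow> 'a"
  assumes x: "norm x = 1" and T: "orthogonal_transformation T" and y: "T x = y"
  shows "distr (Kx x) sph_space (\<lambda>q. Fk y (T (fst q), snd q)) = distr (Kx y) sph_space (Fk y)"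
proof (rule measure_eqI)
  have ny: "norm y = 1" using x T y orthogonal_transformation_norm by metis
  have Gm: "(\<lambda>q. Fk y (T (fst q), snd q)) \<in> measurable (Kx x) sph_space"
    using sph_meas[OF x Gk_borel[OF T]] Fk_in[OF ny orth_sub[OF T y]] by auto
  have Fm: "Fk y \<in> measurable (Kx y) sph_space"
    using sph_meas[OF ny Fk_borel] Fk_in[OF ny] by blast
  show "sets (distr (Kx x) sph_space (\<lambda>q. Fk y (T (fst q), snd q))) = sets (distr (Kx y) sph_space (Fk y))"
    by simp
  fix A assume "A \<in> sets (distr (Kx x) sph_space (\<lambda>q. Fk y (T (fst q), snd q)))"
  then have A: "A \<in> sets sph_space" by simp
  have Ab: "A \<in> sets borel" using sph_sets[OF A] by blast
  define k where "k q = indicator {0..2*pi} (snd q) * (indicator A (Fk y q) :: ennreal)" for q :: "'a \<times> real"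
  have g2: "(\<lambda>q. indicator A (Fk y q) :: ennreal) \<in> borel_measurable borel"
    using measurable_comp[OF Fk_borel borel_measurable_indicator[OF Ab]] by (simp add: o_def)
  have im: "(\<lambda>q::'a \<times> real. indicator {0..2*pi} (snd q) :: ennreal) \<in> borel_measurable borel"
    by (rule borel_pairI) measurable
  have km: "k \<in> borel_measurable borel"
    unfolding k_def using im g2 by (rule borel_measurable_times_ennreal)
  have km2: "k \<in> borel_measurable (borel \<Otimes>\<^sub>M lborel)"
  proof -
    have "k \<in> borel_measurable (borel \<Otimes>\<^sub>M borel)" using km by (simp add: borel_prod)
    then show ?thesis using measurable_cong_sets[OF sets_pair_measure_cong[OF refl sets_lborel[symmetric]] refl] by blast
  qed
  define h where "h z = (\<integral>\<^sup>+w. k (z, w) \<partial>lborel)" for z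
  have hm: "h \<in> borel_measurable borel"
    unfolding h_def by (rule sigma_finite_measure.borel_measurable_nn_integral_fst[OF sigma_finite_lborel km2])
  have g1: "(\<lambda>q. indicator A (Fk y (T (fst q), snd q)) :: ennreal) \<in> borel_measurable borel"
    using measurable_comp[OF Gk_borel[OF T] borel_measurable_indicator[OF Ab]] by (simp add: o_def)
  have "emeasure (distr (Kx x) sph_space (\<lambda>q. Fk y (T (fst q), snd q))) A
      = (\<integral>\<^sup>+q. indicator A (Fk y (T (fst q), snd q)) \<partial>Kx x)"
    by (rule emeasure_distr_int[OF Gm A])
  also have "\<dots> = (\<integral>\<^sup>+z. \<integral>\<^sup>+w. indicator {0..2*pi} w * indicator A (Fk y (T z, w)) \<partial>lborel \<partial>sub_surface x) / Dn x"
    using KINT[OF x g1] by simp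
  also have "(\<integral>\<^sup>+z. \<integral>\<^sup>+w. indicator {0..2*pi} w * indicator A (Fk y (T z, w)) \<partial>lborel \<partial>sub_surface x)
      = (\<integral>\<^sup>+z. h (T z) \<partial>sub_surface x)"
    by (simp add: h_def k_def)
  also have "\<dots> = (\<integral>\<^sup>+z. h z \<partial>sub_surface y)"
    by (rule surf_rot[OF x T y hm])
  also have "\<dots> = (\<integral>\<^sup>+z. \<integral>\<^sup>+w. indicator {0..2*pi} w * indicator A (Fk y (z, w)) \<partial>lborel \<partial>sub_surface y)"
    by (simp add: h_def k_def)
  also have "Dn x = Dn y" by (rule Dn_eq[OF x T y])
  also have "(\<integral>\<^sup>+z. \<integral>\<^sup>+w. indicator {0..2*pi} w * indicator A (Fk y (z, w)) \<partial>lborel \<partial>sub_surface y) / Dn y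
      = (\<integral>\<^sup>+q. indicator A (Fk y q) \<partial>Kx y)"
    using KINT[OF ny g2] by simp
  also have "\<dots> = emeasure (distr (Kx y) sph_space (Fk y)) A"
    by (rule emeasure_distr_int[OF Fm A, symmetric])
  finally show "emeasure (distr (Kx x) sph_space (\<lambda>q. Fk y (T (fst q), snd q))) A = emeasure (distr (Kx y) sph_space (Fk y)) A" .
qed

lemma Dn_fin:
  fixes x :: "'a::euclidean_space"
  assumes x: "norm x = 1" and d: "DIM('a) \<ge> 2"
  obtains c where "emeasure (sub_surface x) (subsphere x) = ennreal c" "0 < c" "Dn x = ennreal (2 * pi * c)"
proof -
  obtain c where c: "emeasure (sub_surface x) (subsphere x) = ennreal c" "0 < c"
    using surf_total_fin[OF x d] by blast
  then have "Dn x = ennreal (2 * pi * c)" by (simp add: Dn_def ennreal_mult)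
  then show ?thesis using c that by blast
qed

lemma Kx_prob:
  fixes x :: "'a::euclidean_space"
  assumes x: "norm x = 1" and d: "DIM('a) \<ge> 2"
  shows "prob_space (Kx x)"
proof
  obtain c where c: "emeasure (sub_surface x) (subsphere x) = ennreal c" "0 < c" "Dn x = ennreal (2 * pi * c)"
    using Dn_fin[OF x d] by blast
  have "emeasure (Kx x) (space (Kx x)) = (\<integral>\<^sup>+q. 1 \<partial>Kx x)" by simp
  also have "\<dots> = (\<integral>\<^sup>+z. \<integral>\<^sup>+w. indicator {0..2*pi} w * 1 \<partial>lborel \<partial>sub_surface x) / Dn x"
    by (rule KINT[OF x]) simp
  also have "\<dots> = (\<integral>\<^sup>+z. ennreal (2 * pi) \<partial>sub_surface x) / Dn x"
    by simp
  also have "\<dots> = ennreal (2 * pi) * ennreal c / ennreal (2 * pi * c)"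
    using c by (simp add: space_sub_surface[OF x])
  also have "\<dots> = 1"
    using c by (simp add: ennreal_mult[symmetric])
  finally show "emeasure (Kx x) (space (Kx x)) = 1" .
qed

lemma bessel2:
  fixes e f z :: "'a::euclidean_space"
  assumes e: "norm e = 1" and f: "norm f = 1" and ef: "e \<bullet> f = 0"
  shows "(e \<bullet> z)\<^sup>2 + (f \<bullet> z)\<^sup>2 \<le> (norm z)\<^sup>2"
proof -
  define a b where "a = e \<bullet> z" and "b = f \<bullet> z"
  have eq: "(a *\<^sub>R e + b *\<^sub>R f) \<bullet> z = a\<^sup>2 + b\<^sup>2"
    by (simp add: inner_add_left a_def b_def power2_eq_square)
  have cs: "(a *\<^sub>R e + b *\<^sub>R f) \<bullet> z \<le> norm (a *\<^sub>R e + b *\<^sub>R f) * norm z"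
    by (rule norm_cauchy_schwarz)
  have le: "a\<^sup>2 + b\<^sup>2 \<le> sqrt (a\<^sup>2 + b\<^sup>2) * norm z"
    using eq cs norm_comb[OF e f ef, of a b] by simp
  have "a\<^sup>2 + b\<^sup>2 \<le> (norm z)\<^sup>2"
  proof (cases "a\<^sup>2 + b\<^sup>2 = 0")
    case True then show ?thesis by simp
  next
    case False
    have nn: "0 \<le> a\<^sup>2 + b\<^sup>2" by simp
    then have pos0: "0 < a\<^sup>2 + b\<^sup>2" using False by linarith
    then have pos: "0 < sqrt (a\<^sup>2 + b\<^sup>2)" by simp
    have "sqrt (a\<^sup>2 + b\<^sup>2) * sqrt (a\<^sup>2 + b\<^sup>2) \<le> sqrt (a\<^sup>2 + b\<^sup>2) * norm z"
      using le nn by simp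
    have sl: "sqrt (a\<^sup>2 + b\<^sup>2) \<le> norm z"
      using mult_le_cancel_left_pos[OF pos] \<open>sqrt (a\<^sup>2 + b\<^sup>2) * sqrt (a\<^sup>2 + b\<^sup>2) \<le> sqrt (a\<^sup>2 + b\<^sup>2) * norm z\<close> by blast
    have "(sqrt (a\<^sup>2 + b\<^sup>2))\<^sup>2 \<le> (norm z)\<^sup>2"
      using sl by (intro power_mono) auto
    then show ?thesis using nn by simp
  qed
  then show ?thesis by (simp add: a_def b_def)
qed

lemma sym_bound:
  fixes x e :: "'a::euclidean_space"
  assumes x: "norm x = 1" and e: "norm e = 1" and xe: "x \<bullet> e = 0" and d: "DIM('a) \<ge> 3"
  shows "2 * (\<integral>\<^sup>+z. ennreal ((e \<bullet> z)\<^sup>2) \<partial>sub_surface x) \<le> emeasure (sub_surface x) (subsphere x)"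
proof -
  obtain f where f: "norm f = 1" "x \<bullet> f = 0" "e \<bullet> f = 0"
    using second_orth_exists[OF d] by blast
  let ?Q = "refl2 e f"
  have Q: "orthogonal_transformation ?Q" by (rule refl2_orth[OF e f(1) f(3)])
  have Qx: "?Q x = x" by (rule refl2_x[OF xe f(2)])
  have em: "(\<lambda>z. ennreal ((e \<bullet> z)\<^sup>2)) \<in> borel_measurable borel" by measurable
  have fm: "(\<lambda>z. ennreal ((f \<bullet> z)\<^sup>2)) \<in> borel_measurable borel" by measurable
  have "(\<integral>\<^sup>+z. ennreal ((f \<bullet> z)\<^sup>2) \<partial>sub_surface x) = (\<integral>\<^sup>+z. ennreal ((e \<bullet> ?Q z)\<^sup>2) \<partial>sub_surface x)"
    by (simp add: refl2_e[OF e f(1) f(3)])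
  also have "\<dots> = (\<integral>\<^sup>+z. ennreal ((e \<bullet> z)\<^sup>2) \<partial>sub_surface x)"
    by (rule surf_rot[OF x Q Qx em])
  finally have J: "(\<integral>\<^sup>+z. ennreal ((f \<bullet> z)\<^sup>2) \<partial>sub_surface x) = (\<integral>\<^sup>+z. ennreal ((e \<bullet> z)\<^sup>2) \<partial>sub_surface x)" .
  have "2 * (\<integral>\<^sup>+z. ennreal ((e \<bullet> z)\<^sup>2) \<partial>sub_surface x)
      = (\<integral>\<^sup>+z. ennreal ((e \<bullet> z)\<^sup>2) \<partial>sub_surface x) + (\<integral>\<^sup>+z. ennreal ((f \<bullet> z)\<^sup>2) \<partial>sub_surface x)"
    by (simp add: J mult_2)
  also have "\<dots> = (\<integral>\<^sup>+z. ennreal ((e \<bullet> z)\<^sup>2) + ennreal ((f \<bullet> z)\<^sup>2) \<partial>sub_surface x)"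
    by (rule nn_integral_add[symmetric]) (auto intro: surf_meas[OF x] em fm)
  also have "\<dots> \<le> (\<integral>\<^sup>+z. 1 \<partial>sub_surface x)"
  proof (rule nn_integral_mono)
    fix z assume "z \<in> space (sub_surface x)"
    then have "norm z = 1" by (simp add: space_sub_surface[OF x] subsphere_def)
    then have "(e \<bullet> z)\<^sup>2 + (f \<bullet> z)\<^sup>2 \<le> 1" using bessel2[OF e f(1) f(3), of z] by simp
    then show "ennreal ((e \<bullet> z)\<^sup>2) + ennreal ((f \<bullet> z)\<^sup>2) \<le> 1"
      by (simp add: ennreal_plus[symmetric] del: ennreal_plus)
  qed
  also have "\<dots> = emeasure (sub_surface x) (subsphere x)"
    by (simp add: space_sub_surface[OF x])
  finally show ?thesis .
qed


lemma cost_bound: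
  fixes x y e :: "'a::euclidean_space"
  assumes x: "norm x = 1" and d: "DIM('a) \<ge> 3" and e: "norm e = 1" and xe: "x \<bullet> e = 0"
    and yeq: "y = c *\<^sub>R x + s *\<^sub>R e"
  shows "(\<integral>\<^sup>+q. ennreal (dist (Fk x q) (Fk y (rot x e c s (fst q), snd q))) \<partial>Kx x) \<le> ennreal (7/8 * dist x y)"
proof -
  define L where "L = dist x y"
  define R where "R = rot x e c s"
  define al where "al = L * (4/7 + 7/8) * pi"
  define be where "be = L * (4/7) * pi"
  have L0: "0 \<le> L" by (simp add: L_def)
  have al0: "0 \<le> al" using L0 by (simp add: al_def)
  have be0: "0 \<le> be" using L0 by (simp add: be_def)
  have d2: "DIM('a) \<ge> 2" using d by simp
  obtain cr where cr: "emeasure (sub_surface x) (subsphere x) = ennreal cr" "0 < cr" "Dn x = ennreal (2 * pi * cr)"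
    using Dn_fin[OF x d2] by blast
  have mR[measurable]: "R \<in> borel_measurable borel"
    unfolding R_def using linear_borel rot_linear by blast
  have dm: "(\<lambda>q. ennreal (dist (Fk x q) (Fk y (R (fst q), snd q)))) \<in> borel_measurable borel"
    by (rule borel_pairI) (unfold Fk_def, measurable)
  have step1: "(\<integral>\<^sup>+q. ennreal (dist (Fk x q) (Fk y (R (fst q), snd q))) \<partial>Kx x)
      = (\<integral>\<^sup>+z. \<integral>\<^sup>+w. indicator {0..2*pi} w * ennreal (dist (Fk x (z, w)) (Fk y (R z, w))) \<partial>lborel \<partial>sub_surface x) / Dn x"
    using KINT[OF x dm] by simp
  have inner: "(\<integral>\<^sup>+w. indicator {0..2*pi} w * ennreal (dist (Fk x (z, w)) (Fk y (R z, w))) \<partial>lborel)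
      \<le> ennreal (al + be * (e \<bullet> z)\<^sup>2)" if z: "z \<in> space (sub_surface x)" for z
  proof -
    have xz: "x \<bullet> z = 0" using z by (simp add: space_sub_surface[OF x] subsphere_def)
    have "(\<integral>\<^sup>+w. indicator {0..2*pi} w * ennreal (dist (Fk x (z, w)) (Fk y (R z, w))) \<partial>lborel)
        \<le> (\<integral>\<^sup>+w. ennreal (indicator {0..2*pi} w * (L * ((4/7) * ((cos w)\<^sup>2 + (e \<bullet> z)\<^sup>2 * (sin w)\<^sup>2) + 7/16))) \<partial>lborel)"
    proof (rule nn_integral_mono)
      fix w :: real
      have pb: "dist (Fk x (z, w)) (Fk y (R z, w)) \<le> L * ((4/7) * ((cos w)\<^sup>2 + (e \<bullet> z)\<^sup>2 * (sin w)\<^sup>2) + 7/16)"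
        using pointwise_bound[OF x e xe yeq xz, of w] by (simp add: Fk_def R_def L_def)
      show "indicator {0..2*pi} w * ennreal (dist (Fk x (z, w)) (Fk y (R z, w)))
          \<le> ennreal (indicator {0..2*pi} w * (L * ((4/7) * ((cos w)\<^sup>2 + (e \<bullet> z)\<^sup>2 * (sin w)\<^sup>2) + 7/16)))"
        using pb by (cases "w \<in> {0..2*pi}") (auto intro: ennreal_leI)
    qed
    also have "\<dots> = ennreal (L * ((4/7) * (pi + (e \<bullet> z)\<^sup>2 * pi) + 7/8 * pi))"
      by (rule omega_int[OF L0])
    also have "L * ((4/7) * (pi + (e \<bullet> z)\<^sup>2 * pi) + 7/8 * pi) = al + be * (e \<bullet> z)\<^sup>2"
      by (simp add: al_def be_def algebra_simps)
    finally show ?thesis .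
  qed
  define I where "I = (\<integral>\<^sup>+z. ennreal ((e \<bullet> z)\<^sup>2) \<partial>sub_surface x)"
  have sb: "2 * I \<le> ennreal cr" using sym_bound[OF x e xe d] cr by (simp add: I_def)
  then have "I \<noteq> \<top>" by (auto simp: ennreal_mult_eq_top_iff top_unique)
  then obtain Ir where Ir: "I = ennreal Ir" "0 \<le> Ir" by (cases I) auto
  have "ennreal (2 * Ir) \<le> ennreal cr" using sb Ir by (simp add: ennreal_mult)
  then have Ir2: "2 * Ir \<le> cr" using cr(2) by (simp add: ennreal_le_iff)
  have em: "(\<lambda>z. ennreal ((e \<bullet> z)\<^sup>2)) \<in> borel_measurable borel" by measurable
  have "(\<integral>\<^sup>+z. \<integral>\<^sup>+w. indicator {0..2*pi} w * ennreal (dist (Fk x (z, w)) (Fk y (R z, w))) \<partial>lborel \<partial>sub_surface x)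
      \<le> (\<integral>\<^sup>+z. ennreal (al + be * (e \<bullet> z)\<^sup>2) \<partial>sub_surface x)"
    by (rule nn_integral_mono) (rule inner)
  also have "\<dots> = (\<integral>\<^sup>+z. ennreal al + ennreal be * ennreal ((e \<bullet> z)\<^sup>2) \<partial>sub_surface x)"
    using al0 be0 by (simp add: ennreal_mult)
  also have "\<dots> = (\<integral>\<^sup>+z. ennreal al \<partial>sub_surface x) + (\<integral>\<^sup>+z. ennreal be * ennreal ((e \<bullet> z)\<^sup>2) \<partial>sub_surface x)"
    by (rule nn_integral_add) (auto intro: surf_meas[OF x] em)
  also have "\<dots> = ennreal al * ennreal cr + ennreal be * ennreal Ir"
    using surf_meas[OF x em] cr Ir by (simp add: nn_integral_cmult space_sub_surface[OF x] I_def)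
  also have "\<dots> = ennreal (al * cr + be * Ir)"
    using al0 be0 cr(2) Ir(2) by (simp add: ennreal_mult)
  also have "\<dots> \<le> ennreal (al * cr + be * (cr / 2))"
    using be0 Ir2 by (intro ennreal_leI add_left_mono mult_left_mono) auto
  finally have outer: "(\<integral>\<^sup>+z. \<integral>\<^sup>+w. indicator {0..2*pi} w * ennreal (dist (Fk x (z, w)) (Fk y (R z, w))) \<partial>lborel \<partial>sub_surface x)
      \<le> ennreal (al * cr + be * (cr / 2))" .
  have "(\<integral>\<^sup>+q. ennreal (dist (Fk x q) (Fk y (R (fst q), snd q))) \<partial>Kx x)
      \<le> ennreal (al * cr + be * (cr / 2)) / ennreal (2 * pi * cr)"
    unfolding step1 cr(3)[symmetric] by (rule divide_right_mono_ennreal[OF outer])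
  also have "\<dots> = ennreal ((al * cr + be * (cr / 2)) / (2 * pi * cr))"
    using al0 be0 cr(2) by (intro divide_ennreal) auto
  also have "(al * cr + be * (cr / 2)) / (2 * pi * cr) = L * (97/112)"
    using cr(2) by (simp add: al_def be_def field_simps)
  also have "ennreal (L * (97/112)) \<le> ennreal (7/8 * dist x y)"
    using L0 by (intro ennreal_leI) (simp add: L_def)
  finally show ?thesis by (simp add: R_def)
qed

lemma pair_bound:
  fixes x y :: "'a::euclidean_space"
  assumes x: "norm x = 1" and y: "norm y = 1" and d: "DIM('a) \<ge> 3"
  shows "wasserstein1 (gss_P x) (gss_P y) \<le> ennreal (7/8 * dist x y)"
proof -
  have d2: "DIM('a) \<ge> 2" using d by simp
  obtain e where e: "norm e = 1" "x \<bullet> e = 0" and yeq: "y = (x \<bullet> y) *\<^sub>R x + (e \<bullet> y) *\<^sub>R e"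
    using frame_exists[OF x y d2] by blast
  define c s where "c = x \<bullet> y" and "s = e \<bullet> y"
  have yeq': "y = c *\<^sub>R x + s *\<^sub>R e" using yeq by (simp add: c_def s_def)
  have "1 = norm y" using y by simp
  also have "\<dots> = sqrt (c\<^sup>2 + s\<^sup>2)" unfolding yeq' by (rule norm_comb[OF x e])
  finally have cs: "c\<^sup>2 + s\<^sup>2 = 1" by (metis real_sqrt_eq_1_iff)
  define R where "R = rot x e c s"
  have R: "orthogonal_transformation R" unfolding R_def by (rule rot_orth[OF x e cs])
  have Rx: "R x = y" unfolding R_def using rot_x[OF x e(2)] yeq' by simp
  define H where "H q = (Fk x q, Fk y (R (fst q), snd q))" for q
  have P: "prob_space (Kx x)" by (rule Kx_prob[OF x d2])
  have Fm: "Fk x \<in> measurable (Kx x) sph_space"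
    using sph_meas[OF x Fk_borel] Fk_in[OF x] by blast
  have Gm: "(\<lambda>q. Fk y (R (fst q), snd q)) \<in> measurable (Kx x) sph_space"
    using sph_meas[OF x Gk_borel[OF R]] Fk_in[OF y orth_sub[OF R Rx]] by auto
  have Hm: "H \<in> measurable (Kx x) (sph_space \<Otimes>\<^sub>M sph_space)"
    unfolding H_def using Fm Gm by (rule measurable_Pair)
  define \<gamma> where "\<gamma> = distr (Kx x) (sph_space \<Otimes>\<^sub>M sph_space) H"
  have coup: "coupling (gss_P x) (gss_P y) \<gamma>"
    unfolding coupling_def
  proof (intro conjI)
    show "sets \<gamma> = sets (sph_space \<Otimes>\<^sub>M sph_space)" by (simp add: \<gamma>_def)
    show "prob_space \<gamma>" unfolding \<gamma>_def by (rule prob_space.prob_space_distr[OF P Hm])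
    have "distr \<gamma> sph_space fst = distr (Kx x) sph_space (fst \<circ> H)"
      unfolding \<gamma>_def by (rule distr_distr[OF measurable_fst Hm])
    also have "\<dots> = distr (Kx x) sph_space (Fk x)" by (simp add: H_def o_def)
    also have "\<dots> = gss_P x" by (rule gssP_eq[OF x, symmetric])
    finally show "distr \<gamma> sph_space fst = gss_P x" .
    have "distr \<gamma> sph_space snd = distr (Kx x) sph_space (snd \<circ> H)"
      unfolding \<gamma>_def by (rule distr_distr[OF measurable_snd Hm])
    also have "\<dots> = distr (Kx x) sph_space (\<lambda>q. Fk y (R (fst q), snd q))" by (simp add: H_def o_def)
    also have "\<dots> = distr (Kx y) sph_space (Fk y)" by (rule marg2[OF x R Rx])
    also have "\<dots> = gss_P y" by (rule gssP_eq[OF y, symmetric])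
    finally show "distr \<gamma> sph_space snd = gss_P y" .
  qed
  have dmeas: "(\<lambda>p. ennreal (dist (fst p) (snd p))) \<in> borel_measurable (sph_space \<Otimes>\<^sub>M (sph_space :: 'a measure))"
  proof -
    have i: "(\<lambda>z. z) \<in> measurable (sph_space :: 'a measure) borel"
      unfolding sph_space_def by (rule measurable_restrict_space1) simp
    have [measurable]: "fst \<in> measurable ((sph_space :: 'a measure) \<Otimes>\<^sub>M (sph_space :: 'a measure)) borel"
      using measurable_comp[OF measurable_fst[of "sph_space::'a measure" "sph_space::'a measure"] i] by (simp add: o_def)
    have [measurable]: "snd \<in> measurable ((sph_space :: 'a measure) \<Otimes>\<^sub>M (sph_space :: 'a measure)) borel"
      using measurable_comp[OF measurable_snd[of "sph_space::'a measure" "sph_space::'a measure"] i] by (simp add: o_def)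
    show ?thesis by measurable
  qed
  have "wasserstein1 (gss_P x) (gss_P y) \<le> (\<integral>\<^sup>+p. ennreal (dist (fst p) (snd p)) \<partial>\<gamma>)"
    unfolding wasserstein1_def using coup by (intro INF_lower) simp
  also have "\<dots> = (\<integral>\<^sup>+q. ennreal (dist (Fk x q) (Fk y (R (fst q), snd q))) \<partial>Kx x)"
    unfolding \<gamma>_def using dmeas by (subst nn_integral_distr[OF Hm]) (auto simp: H_def)
  also have "\<dots> \<le> ennreal (7/8 * dist x y)"
    unfolding R_def by (rule cost_bound[OF x d e yeq'])
  finally show ?thesis .
qed

theorem corollary3:
  assumes "DIM('a::euclidean_space) \<ge> 3"
  shows "Dob (gss_P :: 'a \<Rightarrow> 'a measure) \<le> ennreal (7/8)"
  unfolding Dob_def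
proof (rule SUP_least)
  fix p :: "'a \<times> 'a"
  assume "p \<in> {(x, y). x \<in> usphere \<and> y \<in> usphere \<and> x \<noteq> y}"
  then obtain x y where p: "p = (x, y)" and x: "norm x = 1" and y: "norm y = 1" and xy: "x \<noteq> y"
    by (auto simp: usphere_def)
  have dpos: "0 < dist x y" using xy by simp
  have "wasserstein1 (gss_P x) (gss_P y) / ennreal (dist x y) \<le> ennreal (7/8 * dist x y) / ennreal (dist x y)"
    by (rule divide_right_mono_ennreal[OF pair_bound[OF x y assms]])
  also have "\<dots> = ennreal (7/8 * dist x y / dist x y)"
    using dpos by (intro divide_ennreal) auto
  also have "\<dots> = ennreal (7/8)" using dpos by simp
  finally show "wasserstein1 (gss_P (fst p)) (gss_P (snd p)) / ennreal (dist (fst p) (snd p)) \<le> ennreal (7/8)"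
    by (simp add: p)
qed

end
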